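(* The consequence relation $ss \cap tt$ has a unique truth-functional binary connective $\to$ satisfying the single-conclusion version of the conclusion-Gentzen regularity rule (i.e.\ the deduction theorem): for all sets of formulae $\Gamma$ and formulae $A,B$, $\Gamma \vdash A \to B$ iff $\Gamma, A\vdash B$. It is the connective whose truth-function is given by $x \to y = 1$ if $x \leq y$, and $x \to y = y$ otherwise; that is, $1\to 1 = 1$, $1\to \tfrac{1}{2} = \tfrac{1}{2}$, $1 \to 0 = 0$, $\tfrac{1}{2}\to 1 = 1$, $\tfrac{1}{2}\to\tfrac{1}{2} = 1$, $\tfrac{1}{2}\to 0 = 0$, and $0 \to y = 1$ for every $y$ (a three-valued Gödel implication). However, $ss \cap tt$ has no truth-functional connective $\to$ satisfying the single-conclusion version of the premise-Gentzen regularity rule: for all $\Gamma, A, B$, $\Gamma, A\to B\vdash$ (empty conclusion) iff ($\Gamma, B \vdash$ and $\Gamma \vdash A$). The Gödel conditional just defined does, however, satisfy the right-to-left direction of that premise rule: if $\Gamma, B \vdash$ and $\Gamma \vdash A$, then $\Gamma, A\to B\vdash$.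
   Context: Three-valued truth-functional semantics with truth values $\{0, \tfrac{1}{2}, 1\}$ ordered $0 < \tfrac{1}{2} < 1$, over a sentential language whose semantics is constant expressive (for each truth value there is a formula taking that value under every valuation), and where consequence relates sets of premises to sets of conclusions (possibly empty). The relation $ss \cap tt$ is the intersection of the pure consequence relation $ss$ (preservation of the value $1$: whenever all premises take value $1$, some conclusion takes value $1$) and the pure consequence relation $tt$ (preservation of non-zero values: whenever all premises take a value in $\{1,\tfrac{1}{2}\}$, some conclusion does). Equivalently, $\Gamma \vdash \Delta$ iff for every valuation $v$: some premise value is $\leq$ some conclusion value, or some premise has value $0$, or some conclusion has value $1$. *)

theory Defs
  imports Main
begin

datatype tv = Zero | Half | One

fun tv_rank :: "tv \<Rightarrow> nat" where
  "tv_rank Zero = 0" | "tv_rank Half = 1" | "tv_rank One = 2"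

definition tv_le :: "tv \<Rightarrow> tv \<Rightarrow> bool" where
  "tv_le x y \<longleftrightarrow> tv_rank x \<le> tv_rank y"

text \<open>Formulas: atoms, a constant for each truth value (constant expressiveness),
  the binary connective under study, and arbitrary further connectives.\<close>
datatype 'c form = Var nat | Const tv | Imp "'c form" "'c form" | Op 'c "'c form list"

fun eval :: "('c \<Rightarrow> tv list \<Rightarrow> tv) \<Rightarrow> (tv \<Rightarrow> tv \<Rightarrow> tv) \<Rightarrow> (nat \<Rightarrow> tv) \<Rightarrow> 'c form \<Rightarrow> tv" where
  "eval I f v (Var n) = v n"
| "eval I f v (Const c) = c"
| "eval I f v (Imp A B) = f (eval I f v A) (eval I f v B)"
| "eval I f v (Op c As) = I c (map (eval I f v) As)"

definition ss :: "('c \<Rightarrow> tv list \<Rightarrow> tv) \<Rightarrow> (tv \<Rightarrow> tv \<Rightarrow> tv) \<Rightarrow> 'c form set \<Rightarrow> 'c form set \<Rightarrow> bool" where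
  "ss I f \<Gamma> \<Delta> \<longleftrightarrow> (\<forall>v. (\<forall>G\<in>\<Gamma>. eval I f v G = One) \<longrightarrow> (\<exists>D\<in>\<Delta>. eval I f v D = One))"

definition tt :: "('c \<Rightarrow> tv list \<Rightarrow> tv) \<Rightarrow> (tv \<Rightarrow> tv \<Rightarrow> tv) \<Rightarrow> 'c form set \<Rightarrow> 'c form set \<Rightarrow> bool" where
  "tt I f \<Gamma> \<Delta> \<longleftrightarrow> (\<forall>v. (\<forall>G\<in>\<Gamma>. eval I f v G \<noteq> Zero) \<longrightarrow> (\<exists>D\<in>\<Delta>. eval I f v D \<noteq> Zero))"

definition sstt :: "('c \<Rightarrow> tv list \<Rightarrow> tv) \<Rightarrow> (tv \<Rightarrow> tv \<Rightarrow> tv) \<Rightarrow> 'c form set \<Rightarrow> 'c form set \<Rightarrow> bool" where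
  "sstt I f \<Gamma> \<Delta> \<longleftrightarrow> ss I f \<Gamma> \<Delta> \<and> tt I f \<Gamma> \<Delta>"

definition godel :: "tv \<Rightarrow> tv \<Rightarrow> tv" where
  "godel x y = (if tv_le x y then One else y)"

definition deduction_rule :: "('c \<Rightarrow> tv list \<Rightarrow> tv) \<Rightarrow> (tv \<Rightarrow> tv \<Rightarrow> tv) \<Rightarrow> bool" where
  "deduction_rule I f \<longleftrightarrow>
     (\<forall>\<Gamma> A B. sstt I f \<Gamma> {Imp A B} \<longleftrightarrow> sstt I f (insert A \<Gamma>) {B})"

definition premise_rule :: "('c \<Rightarrow> tv list \<Rightarrow> tv) \<Rightarrow> (tv \<Rightarrow> tv \<Rightarrow> tv) \<Rightarrow> bool" where
  "premise_rule I f \<longleftrightarrow>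
     (\<forall>\<Gamma> A B. sstt I f (insert (Imp A B) \<Gamma>) {} \<longleftrightarrow>
                (sstt I f (insert B \<Gamma>) {} \<and> sstt I f \<Gamma> {A}))"

definition premise_rule_rtl :: "('c \<Rightarrow> tv list \<Rightarrow> tv) \<Rightarrow> (tv \<Rightarrow> tv \<Rightarrow> tv) \<Rightarrow> bool" where
  "premise_rule_rtl I f \<longleftrightarrow>
     (\<forall>\<Gamma> A B. sstt I f (insert B \<Gamma>) {} \<and> sstt I f \<Gamma> {A} \<longrightarrow>
                sstt I f (insert (Imp A B) \<Gamma>) {})"

end

theory Submission
  imports Defs
begin

lemma sstt_empty: "sstt I f \<Gamma> {} \<longleftrightarrow> (\<forall>v. \<exists>G\<in>\<Gamma>. eval I f v G = Zero)"
proof -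
  have "\<And>x. x = Zero \<Longrightarrow> x \<noteq> One" by simp
  thus ?thesis unfolding sstt_def ss_def tt_def by blast
qed

lemma sstt_single: "sstt I f \<Gamma> {D} \<longleftrightarrow> (\<forall>v. ((\<forall>G\<in>\<Gamma>. eval I f v G = One) \<longrightarrow> eval I f v D = One)
   \<and> ((\<forall>G\<in>\<Gamma>. eval I f v G \<noteq> Zero) \<longrightarrow> eval I f v D \<noteq> Zero))"
  unfolding sstt_def ss_def tt_def by auto

lemma godel_One: "godel a b = One \<longleftrightarrow> (a = Zero \<or> b = One \<or> a = b)"
  by (cases a; cases b; simp add: godel_def tv_le_def)

lemma godel_Zero: "godel a b = Zero \<longleftrightarrow> (a \<noteq> Zero \<and> b = Zero)"
  by (cases a; cases b; simp add: godel_def tv_le_def)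

lemma godel_ded: "deduction_rule I godel"
  unfolding deduction_rule_def sstt_single
proof (intro allI, rule iffI)
  fix \<Gamma> A B
  assume h: "\<forall>v. ((\<forall>G\<in>\<Gamma>. eval I godel v G = One) \<longrightarrow> eval I godel v (Imp A B) = One) \<and>
             ((\<forall>G\<in>\<Gamma>. eval I godel v G \<noteq> Zero) \<longrightarrow> eval I godel v (Imp A B) \<noteq> Zero)"
  show "\<forall>v. ((\<forall>G\<in>insert A \<Gamma>. eval I godel v G = One) \<longrightarrow> eval I godel v B = One) \<and>
             ((\<forall>G\<in>insert A \<Gamma>. eval I godel v G \<noteq> Zero) \<longrightarrow> eval I godel v B \<noteq> Zero)"
  proof
    fix v
    from h[rule_format, of v] show "((\<forall>G\<in>insert A \<Gamma>. eval I godel v G = One) \<longrightarrow> eval I godel v B = One) \<and>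
             ((\<forall>G\<in>insert A \<Gamma>. eval I godel v G \<noteq> Zero) \<longrightarrow> eval I godel v B \<noteq> Zero)"
      by (auto simp: godel_One godel_Zero)
  qed
next
  fix \<Gamma> A B
  assume h: "\<forall>v. ((\<forall>G\<in>insert A \<Gamma>. eval I godel v G = One) \<longrightarrow> eval I godel v B = One) \<and>
             ((\<forall>G\<in>insert A \<Gamma>. eval I godel v G \<noteq> Zero) \<longrightarrow> eval I godel v B \<noteq> Zero)"
  show "\<forall>v. ((\<forall>G\<in>\<Gamma>. eval I godel v G = One) \<longrightarrow> eval I godel v (Imp A B) = One) \<and>
             ((\<forall>G\<in>\<Gamma>. eval I godel v G \<noteq> Zero) \<longrightarrow> eval I godel v (Imp A B) \<noteq> Zero)"
  proof
    fix v
    have h1: "(\<forall>G\<in>insert A \<Gamma>. eval I godel v G = One) \<longrightarrow> eval I godel v B = One"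
      and h2: "(\<forall>G\<in>insert A \<Gamma>. eval I godel v G \<noteq> Zero) \<longrightarrow> eval I godel v B \<noteq> Zero"
      using h by blast+
    show "((\<forall>G\<in>\<Gamma>. eval I godel v G = One) \<longrightarrow> eval I godel v (Imp A B) = One) \<and>
             ((\<forall>G\<in>\<Gamma>. eval I godel v G \<noteq> Zero) \<longrightarrow> eval I godel v (Imp A B) \<noteq> Zero)"
    proof (intro conjI impI)
      assume g: "\<forall>G\<in>\<Gamma>. eval I godel v G = One"
      show "eval I godel v (Imp A B) = One"
      proof (cases "eval I godel v A")
        case Zero thus ?thesis by (simp add: godel_One)
      next
        case One thus ?thesis using g h1 by (simp add: godel_One)
      next
        case Half thus ?thesis using g h2
          by (cases "eval I godel v B") (auto simp: godel_One)
      qed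
    next
      assume g: "\<forall>G\<in>\<Gamma>. eval I godel v G \<noteq> Zero"
      show "eval I godel v (Imp A B) \<noteq> Zero"
        using g h2 by (auto simp: godel_Zero)
    qed
  qed
qed

lemma ded_unique:
  assumes "deduction_rule I f" shows "f = godel"
proof -
  have k: "\<And>\<Gamma> A B. sstt I f \<Gamma> {Imp A B} \<longleftrightarrow> sstt I f (insert A \<Gamma>) {B}"
    using assms unfolding deduction_rule_def by blast
  have k0: "\<And>x y. f x y = One \<longleftrightarrow> tv_le x y"
  proof -
    fix x y
    show "f x y = One \<longleftrightarrow> tv_le x y"
      using k[of "{}" "Const x" "Const y"]
      by (cases x; cases y; simp add: sstt_single tv_le_def)
  qed
  have k1: "\<And>x y. (f x y \<noteq> Zero) \<longleftrightarrow> (x \<noteq> Zero \<longrightarrow> y \<noteq> Zero)"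
  proof -
    fix x y
    show "(f x y \<noteq> Zero) \<longleftrightarrow> (x \<noteq> Zero \<longrightarrow> y \<noteq> Zero)"
      using k[of "{Const Half}" "Const x" "Const y"]
      by (cases x; cases y; simp add: sstt_single)
  qed
  show ?thesis
  proof (intro ext)
    fix x y
    show "f x y = godel x y"
      using k0[of x y] k1[of x y]
      by (cases x; cases y; cases "f x y"; simp add: godel_def tv_le_def)
  qed
qed

lemma no_premise: "\<not> premise_rule I f"
proof
  assume "premise_rule I f"
  hence k: "\<And>\<Gamma> A B. sstt I f (insert (Imp A B) \<Gamma>) {} \<longleftrightarrow>
                (sstt I f (insert B \<Gamma>) {} \<and> sstt I f \<Gamma> {A})"
    unfolding premise_rule_def by blast
  have a: "f Half Zero = Zero \<longleftrightarrow> False"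
    using k[where \<Gamma>="{}" and A="Const Half" and B="Const Zero"] by (simp add: sstt_empty sstt_single)
  have b: "f Half Zero = Zero \<longleftrightarrow> True"
    using k[where \<Gamma>="{Const Half}" and A="Const Half" and B="Const Zero"] by (simp add: sstt_empty sstt_single)
  from a b show False by simp
qed

lemma godel_rtl: "premise_rule_rtl I godel"
  unfolding premise_rule_rtl_def sstt_empty sstt_single
proof (intro allI impI)
  fix \<Gamma> A B v
  assume h: "(\<forall>v. \<exists>G\<in>insert B \<Gamma>. eval I godel v G = Zero) \<and>
    (\<forall>v. ((\<forall>G\<in>\<Gamma>. eval I godel v G = One) \<longrightarrow> eval I godel v A = One) \<and>
         ((\<forall>G\<in>\<Gamma>. eval I godel v G \<noteq> Zero) \<longrightarrow> eval I godel v A \<noteq> Zero))"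
  show "\<exists>G\<in>insert (Imp A B) \<Gamma>. eval I godel v G = Zero"
    using h by (auto simp: godel_Zero)
qed

theorem theorem4p2:
  fixes I :: "'c \<Rightarrow> tv list \<Rightarrow> tv"
  shows "(\<exists>!f. deduction_rule I f) \<and> deduction_rule I godel
         \<and> \<not> (\<exists>f. premise_rule I f) \<and> premise_rule_rtl I godel"
  using godel_ded ded_unique no_premise godel_rtl by blast

end
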